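(* Let $n>5$ with $n\equiv 0\pmod 4$. Over all even $r\in[2,n-2]$, $E(D_n^s[\boldsymbol r,\boldsymbol{n-r}])$ attains its maximum at $r=4$. More precisely: if $\frac n2\equiv 0\pmod 4$, then $E(D_n^s[\boldsymbol r,\boldsymbol{n-r}])$ is strictly decreasing as $r$ runs through $4,8,\dots,\frac n2,\ \frac n2-2,\frac n2-6,\dots,2$ (in this order); if $\frac n2\equiv 2\pmod 4$, then it is strictly decreasing as $r$ runs through $4,8,\dots,\frac n2-2,\ \frac n2,\frac n2-4,\dots,2$.
   Context: A signed digraph (sidigraph) is a digraph in which every arc carries a sign $+1$ or $-1$; its adjacency matrix $A(S)=[a_{ij}]$ has $a_{ij}$ equal to the sign of the arc $w_iw_j$ if it exists and $0$ otherwise. If $\rho_1,\dots,\rho_n$ are the eigenvalues of $A(S)$, the energy of $S$ is $E(S)=\sum_{k=1}^n|\mathrm{Re}(\rho_k)|$. The sign of a directed cycle is the product of the signs of its arcs. For $k\ge 2$, $C_k$ denotes a directed cycle of length $k$ with sign $+1$ and $\boldsymbol{C}_k$ a directed cycle of length $k$ with sign $-1$. It is known that $E(C_k)=2\cot\frac{\pi}{k}$ if $k\equiv0\pmod 4$, $2\csc\frac{\pi}{k}$ if $k\equiv 2\pmod 4$, $\csc\frac{\pi}{2k}$ if $k$ is odd; and $E(\boldsymbol C_k)=2\csc\frac{\pi}{k}$ if $k\equiv0\pmod 4$, $2\cot\frac{\pi}{k}$ if $k\equiv 2\pmod 4$, $\csc\frac{\pi}{2k}$ if $k$ is odd. For integers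 $p,q\ge 2$ with $p+q\le n$, $D_n^s[p,q]$, $D_n^s[\boldsymbol p,\boldsymbol q]$, $D_n^s[\boldsymbol p,q]$, $D_n^s[p,\boldsymbol q]$ denote an $n$-vertex sidigraph whose only directed cycles are two vertex-disjoint cycles of lengths $p$ and $q$ (all other vertices lying on no directed cycle), where a bold entry indicates that the cycle of that length is negative and a non-bold entry that it is positive. Its energy is the sum of the energies of its two cycles, e.g. $E(D_n^s[\boldsymbol p,\boldsymbol q])=E(\boldsymbol C_p)+E(\boldsymbol C_q)$; in particular the order of the two entries does not matter. *)

theory Defs
  imports Complex_Main
begin

text \<open>Energy of a directed cycle of length k with sign -1 (bold C_k), as given
in the paper: 2 csc(pi/k) if k = 0 mod 4, 2 cot(pi/k) if k = 2 mod 4,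
csc(pi/(2k)) if k odd.\<close>
definition neg_cycle_energy :: "nat \<Rightarrow> real" where
  "neg_cycle_energy k =
     (if k mod 4 = 0 then 2 / sin (pi / real k)
      else if k mod 4 = 2 then 2 * cot (pi / real k)
      else 1 / sin (pi / (2 * real k)))"

text \<open>Energy of D_n^s[bold p, bold q]: sum of the energies of its two negative cycles.\<close>
definition energy_D_neg_neg :: "nat \<Rightarrow> nat \<Rightarrow> nat \<Rightarrow> real" where
  "energy_D_neg_neg n p q = neg_cycle_energy p + neg_cycle_energy q"

end

theory Submission
  imports Defs
begin


lemma v_pos: assumes "0 < s" "s \<le> pi/2" shows "s * cos s < sin s"
proof -
  have "(\<lambda>x. sin x - x * cos x) 0 < (\<lambda>x. sin x - x * cos x) s"
  proof (rule DERIV_pos_imp_increasing_open[OF assms(1)])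
    fix x assume x: "0 < x" "x < s"
    have "DERIV (\<lambda>x. sin x - x * cos x) x :> x * sin x"
      by (auto intro!: derivative_eq_intros)
    moreover have "x * sin x > 0" using x assms by (intro mult_pos_pos sin_gt_zero) auto
    ultimately show "\<exists>y. DERIV (\<lambda>x. sin x - x * cos x) x :> y \<and> y > 0" by blast
  next
    show "continuous_on {0..s} (\<lambda>x. sin x - x * cos x)" by (intro continuous_intros)
  qed
  then show ?thesis by simp
qed

lemma w_pos: assumes "0 < s" "s \<le> pi/2" shows "2 * sin s * cos s < s * (1 + (cos s)^2)"
proof -
  let ?w = "\<lambda>x. x * (1 + (cos x)^2) - 2 * sin x * cos x"
  have "?w 0 < ?w s"
  proof (rule DERIV_pos_imp_increasing_open[OF assms(1)])
    fix x assume x: "0 < x" "x < s"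
    have "DERIV ?w x :> (1 + (cos x)^2 + x * (2 * cos x * (- sin x)) - (2 * cos x * cos x + 2 * sin x * (- sin x)))"
      by (auto intro!: derivative_eq_intros simp: power2_eq_square)
    moreover have "(1 + (cos x)^2 + x * (2 * cos x * (- sin x)) - (2 * cos x * cos x + 2 * sin x * (- sin x)))
       = sin x * (3 * sin x - 2 * x * cos x)"
      using sin_cos_squared_add[of x] by (simp add: algebra_simps power2_eq_square)
    moreover have "sin x * (3 * sin x - 2 * x * cos x) > 0"
    proof -
      have sx: "sin x > 0" using x assms by (intro sin_gt_zero) auto
      have "x * cos x < sin x" using v_pos[of x] x assms by auto
      moreover have "cos x \<ge> 0" using x assms by (intro cos_ge_zero) auto
      moreover have "x * cos x \<ge> 0" using x \<open>cos x \<ge> 0\<close> by simp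
      ultimately have "3 * sin x - 2 * x * cos x > 0" by linarith
      then show ?thesis using sx by simp
    qed
    ultimately show "\<exists>y. DERIV ?w x :> y \<and> y > 0" by metis
  next
    show "continuous_on {0..s} ?w" by (intro continuous_intros)
  qed
  then show ?thesis by simp
qed

lemma k_decr: assumes "0 < s" "s < u" "u \<le> pi/2"
  shows "u^2 * cos u / (sin u)^2 < s^2 * cos s / (sin s)^2"
proof (rule DERIV_neg_imp_decreasing[OF assms(2)])
  fix x assume x: "s \<le> x" "x \<le> u"
  have sx: "sin x > 0" using x assms by (intro sin_gt_zero) auto
  have "DERIV (\<lambda>x. x^2 * cos x / (sin x)^2) x :>
     ((2 * x * cos x + x^2 * (- sin x)) * (sin x)^2 - x^2 * cos x * (2 * sin x * cos x)) / ((sin x)^2 * (sin x)^2)"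
    using sx by (auto intro!: derivative_eq_intros simp: power2_eq_square)
  moreover have "((2 * x * cos x + x^2 * (- sin x)) * (sin x)^2 - x^2 * cos x * (2 * sin x * cos x))
      = x * sin x * (2 * sin x * cos x - x * ((sin x)^2 + 2 * (cos x)^2))"
    by (simp add: algebra_simps power2_eq_square)
  moreover have "(sin x)^2 + 2 * (cos x)^2 = 1 + (cos x)^2"
    using sin_cos_squared_add[of x] by simp
  moreover have "2 * sin x * cos x - x * (1 + (cos x)^2) < 0" using w_pos[of x] x assms by auto
  moreover have "x * sin x > 0" using sx x assms by simp
  ultimately have "((2 * x * cos x + x^2 * (- sin x)) * (sin x)^2 - x^2 * cos x * (2 * sin x * cos x)) < 0"
    by (simp add: mult_pos_neg)
  moreover have "(sin x)^2 * (sin x)^2 > 0" using sx by simp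
  ultimately have "((2 * x * cos x + x^2 * (- sin x)) * (sin x)^2 - x^2 * cos x * (2 * sin x * cos x)) / ((sin x)^2 * (sin x)^2) < 0"
    by (simp add: divide_neg_pos)
  with \<open>DERIV _ x :> _\<close> show "\<exists>y. DERIV (\<lambda>x. x^2 * cos x / (sin x)^2) x :> y \<and> y < 0"
    by blast
qed

lemma m_incr: assumes "0 < s" "s < u" "u \<le> pi/2"
  shows "s / sin s < u / sin u"
proof (rule DERIV_pos_imp_increasing[OF assms(2)])
  fix x assume x: "s \<le> x" "x \<le> u"
  have sx: "sin x > 0" using x assms by (intro sin_gt_zero) auto
  have "DERIV (\<lambda>x. x / sin x) x :> (1 * sin x - x * cos x) / (sin x * sin x)"
    using sx by (auto intro!: derivative_eq_intros)
  moreover have "(1 * sin x - x * cos x) / (sin x * sin x) > 0"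
    using v_pos[of x] x assms sx by simp
  ultimately show "\<exists>y. DERIV (\<lambda>x. x / sin x) x :> y \<and> y > 0" by blast
qed

lemma incr_diff:
  fixes f f' :: "real \<Rightarrow> real"
  assumes der: "\<And>x. x \<ge> lo \<Longrightarrow> (f has_real_derivative f' x) (at x)"
  and mono: "\<And>x y. lo \<le> x \<Longrightarrow> x < y \<Longrightarrow> f' x < f' y"
  and "lo \<le> x" "0 < d" "x + d \<le> y"
  shows "f (x+d) - f x < f (y+d) - f y"
proof -
  obtain z1 where z1: "x < z1" "z1 < x + d" "f (x+d) - f x = (x + d - x) * f' z1"
    using MVT2[of x "x+d" f f'] der assms by auto
  obtain z2 where z2: "y < z2" "z2 < y + d" "f (y+d) - f y = (y + d - y) * f' z2"
    using MVT2[of y "y+d" f f'] der assms by auto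
  have "f' z1 < f' z2" using mono[of z1 z2] z1 z2 assms by auto
  then show ?thesis using z1 z2 assms by simp
qed

definition G :: "real \<Rightarrow> real" where "G x = 1 / sin (pi / x)"
definition H :: "real \<Rightarrow> real" where "H x = cos (pi / x) / sin (pi / x)"

lemma pi_div_bounds: assumes "2 \<le> x" shows "0 < pi / x" "pi / x \<le> pi / 2" "sin (pi/x) > 0"
proof -
  show a: "0 < pi / x" using assms by simp
  show b: "pi / x \<le> pi / 2" using assms pi_gt_zero by (simp add: divide_le_eq)
  have "pi / x < pi" using b pi_gt_zero by linarith
  then show "sin (pi/x) > 0" using a by (intro sin_gt_zero) auto
qed

lemma G_der: assumes "2 \<le> x"
  shows "(G has_real_derivative (cos (pi / x) * pi / (x * x * (sin (pi / x) * sin (pi / x))))) (at x)"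
proof -
  have s: "sin (pi/x) \<noteq> 0" using pi_div_bounds[OF assms] by simp
  have x0: "x \<noteq> 0" using assms by simp
  show ?thesis unfolding G_def[abs_def]
    apply (insert s x0)
    apply (rule derivative_eq_intros refl | simp)+
    done
qed

lemma H_der: assumes "2 \<le> x"
  shows "(H has_real_derivative (pi / (x * x * (sin (pi / x) * sin (pi / x))))) (at x)"
proof -
  have s: "sin (pi/x) \<noteq> 0" using pi_div_bounds[OF assms] by simp
  have x0: "x \<noteq> 0" using assms by simp
  have ss: "cos (pi / x) * cos (pi / x) + sin (pi / x) * sin (pi / x) = 1"
    using sin_cos_squared_add[of "pi/x"] by (simp add: power2_eq_square)
  have e2: "pi * (cos (pi / x) * cos (pi / x)) / (x * x) + pi * (sin (pi / x) * sin (pi / x)) / (x * x) = pi / (x * x)"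
    by (simp only: add_divide_distrib[symmetric] distrib_left[symmetric] ss)
  show ?thesis unfolding H_def[abs_def]
    apply (insert s x0)
    apply (rule derivative_eq_intros refl | simp)+
    using e2 s by (simp add: field_simps)
qed

lemma G'_eq: assumes "2 \<le> x"
  shows "cos (pi / x) * pi / (x * x * (sin (pi / x) * sin (pi / x))) = (pi/x)^2 * cos (pi/x) / (sin (pi/x))^2 / pi"
  using assms by (simp add: field_simps power2_eq_square)

lemma H'_eq: assumes "2 \<le> x"
  shows "pi / (x * x * (sin (pi / x) * sin (pi / x))) = ((pi/x) / sin (pi/x))^2 / pi"
  using assms by (simp add: field_simps power2_eq_square)

lemma G'_mono: assumes "2 \<le> x" "x < y"
  shows "cos (pi / x) * pi / (x * x * (sin (pi / x) * sin (pi / x))) < cos (pi / y) * pi / (y * y * (sin (pi / y) * sin (pi / y)))"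
proof -
  have "pi / y < pi / x" using assms by (simp add: frac_less2)
  then have "(pi/x)^2 * cos (pi/x) / (sin (pi/x))^2 < (pi/y)^2 * cos (pi/y) / (sin (pi/y))^2"
    using k_decr[of "pi/y" "pi/x"] pi_div_bounds[of x] pi_div_bounds[of y] assms by auto
  then have "(pi/x)^2 * cos (pi/x) / (sin (pi/x))^2 / pi < (pi/y)^2 * cos (pi/y) / (sin (pi/y))^2 / pi"
    by (rule divide_strict_right_mono) simp
  moreover have ey: "2 \<le> y" using assms by simp
  ultimately show ?thesis by (simp only: G'_eq[OF assms(1)] G'_eq[OF ey])
qed

lemma H'_mono: assumes "2 \<le> x" "x < y"
  shows "pi / (y * y * (sin (pi / y) * sin (pi / y))) < pi / (x * x * (sin (pi / x) * sin (pi / x)))"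
proof -
  have "pi / y < pi / x" using assms by (simp add: frac_less2)
  then have a: "(pi/y) / sin (pi/y) < (pi/x) / sin (pi/x)"
    using m_incr[of "pi/y" "pi/x"] pi_div_bounds[of x] pi_div_bounds[of y] assms by auto
  have "0 < (pi/y) / sin (pi/y)" using pi_div_bounds[of y] assms by simp
  then have "((pi/y) / sin (pi/y))^2 < ((pi/x) / sin (pi/x))^2" using a by (simp add: power_strict_mono)
  then have "((pi/y) / sin (pi/y))^2 / pi < ((pi/x) / sin (pi/x))^2 / pi"
    by (rule divide_strict_right_mono) simp
  moreover have ey: "2 \<le> y" using assms by simp
  ultimately show ?thesis by (simp only: H'_eq[OF assms(1)] H'_eq[OF ey])
qed

lemma G_step: assumes "2 \<le> x" "0 < d" "x + d \<le> y"
  shows "G (x+d) - G x < G (y+d) - G y"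
  by (rule incr_diff[where lo=2 and f'="\<lambda>x. cos (pi / x) * pi / (x * x * (sin (pi / x) * sin (pi / x)))"])
     (use assms G_der G'_mono in auto)

lemma H_step: assumes "2 \<le> x" "0 < d" "x + d \<le> y"
  shows "H (y+d) - H y < H (x+d) - H x"
proof -
  have "(\<lambda>x. - H x) (x+d) - (\<lambda>x. - H x) x < (\<lambda>x. - H x) (y+d) - (\<lambda>x. - H x) y"
    by (rule incr_diff[where lo=2 and f'="\<lambda>x. - (pi / (x * x * (sin (pi / x) * sin (pi / x))))"])
       (use assms H'_mono in \<open>auto intro!: derivative_eq_intros H_der\<close>)
  then show ?thesis by simp
qed

lemma H_lt_G: assumes "2 \<le> x" shows "H x < G x"
proof -
  have b: "0 < pi/x" "pi/x \<le> pi/2" "sin (pi/x) > 0" using pi_div_bounds[OF assms] by auto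
  have pix: "pi/x \<le> pi" using b pi_gt_zero by linarith
  have "cos (pi/x) < cos 0" by (intro cos_monotone_0_pi order.refl b(1) pix)
  then show ?thesis unfolding H_def G_def using b by (simp add: divide_strict_right_mono)
qed



lemma sub_mod4: assumes "(n::nat) mod 4 = 0" "r \<le> n" "r mod 4 = 0 \<or> r mod 4 = 2"
  shows "(n - r) mod 4 = r mod 4"
proof -
  have "((n - r) mod 4 + r mod 4) mod 4 = n mod 4" using assms(2)
    by (metis le_add_diff_inverse2 mod_add_eq)
  then have h: "((n - r) mod 4 + r mod 4) mod 4 = 0" using assms(1) by simp
  have "(n - r) mod 4 < 4" by simp
  then have "(n - r) mod 4 = 0 \<or> (n - r) mod 4 = 1 \<or> (n - r) mod 4 = 2 \<or> (n - r) mod 4 = 3" by linarith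
  then show ?thesis using h assms(3) by (elim disjE) simp_all
qed


abbreviation Ef :: "nat \<Rightarrow> nat \<Rightarrow> real" where "Ef n r \<equiv> energy_D_neg_neg n r (n - r)"

lemma Ef_sym: "r \<le> n \<Longrightarrow> Ef n (n - r) = Ef n r"
  by (simp add: energy_D_neg_neg_def)

lemma L0: assumes "n mod 4 = 0" "r mod 4 = 0" "r \<le> n"
  shows "Ef n r = 2 * G (real r) + 2 * G (real n - real r)"
proof -
  have "(n - r) mod 4 = 0" using assms sub_mod4[of n r] by simp
  then show ?thesis using assms
    by (simp add: energy_D_neg_neg_def neg_cycle_energy_def G_def of_nat_diff)
qed

lemma L1: assumes "n mod 4 = 0" "r mod 4 = 2" "r \<le> n"
  shows "Ef n r = 2 * H (real r) + 2 * H (real n - real r)"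
proof -
  have "(n - r) mod 4 = 2" using assms sub_mod4[of n r] by simp
  then show ?thesis using assms
    by (simp add: energy_D_neg_neg_def neg_cycle_energy_def H_def cot_def of_nat_diff)
qed

lemma S1: assumes "n mod 4 = 0" "r mod 4 = 0" "4 \<le> r" "2 * (r + 4) \<le> n"
  shows "Ef n (r + 4) < Ef n r"
proof -
  have "G (real r + 4) - G (real r) < G ((real n - real r - 4) + 4) - G (real n - real r - 4)"
    using assms by (intro G_step) auto
  moreover have "Ef n (r + 4) = 2 * G (real r + 4) + 2 * G (real n - real r - 4)"
    using L0[of n "r+4"] assms by (simp add: algebra_simps)
  moreover have "Ef n r = 2 * G (real r) + 2 * G (real n - real r)"
    using L0[of n r] assms by simp
  ultimately show ?thesis by simp
qed

lemma S2: assumes "n mod 4 = 0" "r mod 4 = 2" "2 \<le> r" "2 * (r + 4) \<le> n"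
  shows "Ef n r < Ef n (r + 4)"
proof -
  have "H ((real n - real r - 4) + 4) - H (real n - real r - 4) < H (real r + 4) - H (real r)"
    using assms by (intro H_step) auto
  moreover have "Ef n (r + 4) = 2 * H (real r + 4) + 2 * H (real n - real r - 4)"
    using L1[of n "r+4"] assms by (simp add: algebra_simps)
  moreover have "Ef n r = 2 * H (real r) + 2 * H (real n - real r)"
    using L1[of n r] assms by simp
  ultimately show ?thesis by simp
qed

lemma S3: assumes "n = 8 * k" "1 \<le> k"
  shows "Ef n (4 * k - 2) < Ef n (4 * k)"
proof -
  define a where "a = real (4 * k)"
  have a4: "a \<ge> 4" using assms unfolding a_def by simp
  have "H ((a - 2) + 2 + 2) - H ((a - 2) + 2) < H ((a - 2) + 2) - H (a - 2)"
    using a4 by (intro H_step) auto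
  then have h: "H (a - 2) + H (a + 2) < 2 * H a" by simp
  have hg: "H a < G a" using a4 by (intro H_lt_G) auto
  have "Ef n (4 * k) = 2 * G a + 2 * G a"
    using L0[of n "4 * k"] assms unfolding a_def by simp
  moreover have "Ef n (4 * k - 2) = 2 * H (a - 2) + 2 * H (a + 2)"
  proof -
    have m: "(4 * k - 2) mod 4 = 2" using assms sub_mod4[of "4*k" 2] by simp
    have le: "4 * k - 2 \<le> n" using assms by simp
    have e1: "real (4 * k - 2) = a - 2" using assms unfolding a_def by (simp add: of_nat_diff)
    have e2: "real n - real (4 * k - 2) = a + 2" using assms e1 unfolding a_def by simp
    have L: "Ef n (4 * k - 2) = 2 * H (real (4 * k - 2)) + 2 * H (real n - real (4 * k - 2))"
      by (rule L1[OF _ m le]) (use assms in simp)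
    have e3: "real n - (a - 2) = a + 2" using assms unfolding a_def by simp
    show ?thesis by (simp only: L e1 e3)
  qed
  ultimately show ?thesis using h hg by simp
qed

lemma S4: assumes "n = 8 * k + 4" "1 \<le> k"
  shows "Ef n (4 * k + 2) < Ef n (4 * k)"
proof -
  define a where "a = real (4 * k + 2)"
  have a4: "a \<ge> 6" using assms unfolding a_def by simp
  have "G ((a - 2) + 2) - G (a - 2) < G ((a - 2) + 2 + 2) - G ((a - 2) + 2)"
    using a4 by (intro G_step) auto
  then have g: "2 * G a < G (a - 2) + G (a + 2)" by simp
  have hg: "H a < G a" using a4 by (intro H_lt_G) auto
  have "Ef n (4 * k + 2) = 2 * H a + 2 * H a"
  proof -
    have "(2 + 4 * k) mod 4 = 2" by (simp only: mod_mult_self2) simp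
    then have "(4 * k + 2) mod 4 = 2" by (simp only: add.commute)
    then show ?thesis using L1[of n "4 * k + 2"] assms unfolding a_def by simp
  qed
  moreover have "Ef n (4 * k) = 2 * G (a - 2) + 2 * G (a + 2)"
    using L0[of n "4 * k"] assms unfolding a_def by (simp add: algebra_simps)
  ultimately show ?thesis using g hg by simp
qed

lemma chain_lt:
  fixes u :: "nat \<Rightarrow> real"
  assumes step: "\<And>i. lo \<le> i \<Longrightarrow> Suc i < hi \<Longrightarrow> u (Suc i) < u i"
  shows "lo \<le> i \<Longrightarrow> i < j \<Longrightarrow> j < hi \<Longrightarrow> u j < u i"
proof (induction j)
  case 0 then show ?case by simp
next
  case (Suc j)
  show ?case
  proof (cases "i = j")
    case True then show ?thesis using step Suc by simp
  next
    case False
    then have "u j < u i" using Suc by simp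
    moreover have "u (Suc j) < u j" using step Suc by simp
    ultimately show ?thesis by simp
  qed
qed

lemma chain_le:
  fixes u :: "nat \<Rightarrow> real"
  assumes step: "\<And>i. lo \<le> i \<Longrightarrow> Suc i < hi \<Longrightarrow> u (Suc i) < u i"
  shows "lo \<le> i \<Longrightarrow> i \<le> j \<Longrightarrow> j < hi \<Longrightarrow> u j \<le> u i"
  using chain_lt[of lo hi u, OF step, of i j] by (cases "i = j") auto

lemma chain_sorted:
  fixes u :: "nat \<Rightarrow> real"
  assumes step: "\<And>i. lo \<le> i \<Longrightarrow> Suc i < hi \<Longrightarrow> u (Suc i) < u i"
  shows "sorted_wrt (>) (map u [lo..<hi])"
  unfolding sorted_wrt_iff_nth_less
proof (intro allI impI)
  fix i j assume ij: "i < j" "j < length (map u [lo..<hi])"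
  then have "u (lo + j) < u (lo + i)" using chain_lt[of lo hi u, OF step, of "lo+i" "lo+j"] by simp
  then show "map u [lo..<hi] ! i > map u [lo..<hi] ! j" using ij by simp
qed



lemma mod4_2: "(4 * j + 2) mod 4 = (2::nat)"
proof -
  have "(2 + 4 * j) mod 4 = (2::nat)" by (simp only: mod_mult_self2) simp
  then show ?thesis by (simp only: add.commute)
qed

lemma even_mod4: assumes "even (s::nat)" shows "s mod 4 = 0 \<or> s mod 4 = 2"
proof -
  obtain t where t: "s = 2 * t" using assms by blast
  have "s mod 4 = 2 * (t mod 2)" unfolding t using mod_mult_mult1[of 2 t 2] by simp
  moreover have "t mod 2 = 0 \<or> t mod 2 = 1" by auto
  ultimately show ?thesis by auto
qed

lemma case1:
  assumes n: "n = 8 * k" and k: "1 \<le> k"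
  shows "(\<forall>r. even r \<and> 2 \<le> r \<and> r \<le> n - 2 \<longrightarrow> Ef n r \<le> Ef n 4)
    \<and> sorted_wrt (>) (map (\<lambda>r. Ef n r) (map (\<lambda>i. 4 * i) [1..<k + 1] @ map (\<lambda>i. 4 * k - 2 - 4 * i) [0..<k]))"
proof -
  have n4: "n mod 4 = 0" using n by simp
  define u1 where "u1 i = Ef n (4 * i)" for i
  define u2 where "u2 i = Ef n (4 * k - 2 - 4 * i)" for i
  have st1: "u1 (Suc i) < u1 i" if "1 \<le> i" "Suc i < k + 1" for i
  proof -
    have "Ef n (4 * i + 4) < Ef n (4 * i)"
      by (rule S1) (use n4 that n in auto)
    moreover have "4 * Suc i = 4 * i + 4" by simp
    ultimately show ?thesis unfolding u1_def by (simp add: add.commute)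
  qed
  have st2: "u2 (Suc i) < u2 i" if "0 \<le> i" "Suc i < k" for i
  proof -
    from that(2) obtain j where "k = Suc (Suc i + j)" using less_imp_Suc_add by blast
    then have j: "k = i + 2 + j" by simp
    have "Ef n (4 * j + 2) < Ef n (4 * j + 2 + 4)"
      by (rule S2) (use n4 n j mod4_2 in auto)
    moreover have "4 * k - 2 - 4 * Suc i = 4 * j + 2" "4 * k - 2 - 4 * i = 4 * j + 2 + 4" using j by auto
    ultimately show ?thesis unfolding u2_def by simp
  qed
  have junc: "u2 0 < u1 k" unfolding u1_def u2_def using S3[OF n k] by simp
  have le1: "u1 j \<le> u1 i" if "1 \<le> i" "i \<le> j" "j \<le> k" for i j
    using chain_le[of 1 "k+1" u1, OF st1] that by simp
  have le2: "u2 j \<le> u2 i" if "i \<le> j" "j < k" for i j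
    using chain_le[of 0 k u2, OF st2] that by simp
  have part2: "sorted_wrt (>) (map (\<lambda>r. Ef n r) (map (\<lambda>i. 4 * i) [1..<k + 1] @ map (\<lambda>i. 4 * k - 2 - 4 * i) [0..<k]))"
  proof -
    have eq: "map (\<lambda>r. Ef n r) (map (\<lambda>i. 4 * i) [1..<k + 1] @ map (\<lambda>i. 4 * k - 2 - 4 * i) [0..<k])
      = map u1 [1..<k + 1] @ map u2 [0..<k]" by (simp add: u1_def u2_def)
    have s1: "sorted_wrt (>) (map u1 [1..<k + 1])" by (rule chain_sorted) (rule st1)
    have s2: "sorted_wrt (>) (map u2 [0..<k])" by (rule chain_sorted) (rule st2)
    have cr: "\<forall>x\<in>set (map u1 [1..<k + 1]). \<forall>y\<in>set (map u2 [0..<k]). x > y"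
    proof (intro ballI)
      fix x y assume "x \<in> set (map u1 [1..<k + 1])" "y \<in> set (map u2 [0..<k])"
      then obtain i j where ij: "x = u1 i" "1 \<le> i" "i \<le> k" "y = u2 j" "j < k" by auto
      have "u1 k \<le> u1 i" using le1[of i k] ij by simp
      moreover have "u2 j \<le> u2 0" using le2[of 0 j] ij by simp
      ultimately show "x > y" using junc ij by simp
    qed
    show ?thesis unfolding eq sorted_wrt_append using s1 s2 cr by blast
  qed
  have part1: "Ef n r \<le> Ef n 4" if r: "even r" "2 \<le> r" "r \<le> n - 2" for r
  proof -
    define s where "s = (if r \<le> 4 * k then r else n - r)"
    have rn: "r \<le> n" using r by simp
    have Es: "Ef n r = Ef n s" unfolding s_def using Ef_sym[OF rn] by simp
    have s: "even s" "2 \<le> s" "s \<le> 4 * k" unfolding s_def using r n by auto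
    have u14: "u1 1 = Ef n 4" unfolding u1_def by simp
    from even_mod4[OF s(1)] show ?thesis
    proof
      assume m: "s mod 4 = 0"
      define q where "q = s div 4"
      have sq: "s = 4 * q" unfolding q_def using m div_mult_mod_eq[of s 4] by simp
      have "1 \<le> q" "q \<le> k" using s sq by auto
      then have "u1 q \<le> u1 1" using le1[of 1 q] by simp
      then show ?thesis using Es sq u14 unfolding u1_def by simp
    next
      assume m: "s mod 4 = 2"
      define q where "q = s div 4"
      have sq: "s = 4 * q + 2" unfolding q_def using m div_mult_mod_eq[of s 4] by simp
      have "q < k" using s sq by auto
      then obtain j where "k = Suc (q + j)" using less_imp_Suc_add by blast
      then have j: "k = q + 1 + j" by simp
      have "u2 j = Ef n s" unfolding u2_def using j sq by (simp add: algebra_simps)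
      moreover have "u2 j \<le> u2 0" using le2[of 0 j] j by simp
      moreover have "u1 k \<le> u1 1" using le1[of 1 k] k by simp
      ultimately show ?thesis using Es junc u14 by simp
    qed
  qed
  show ?thesis using part1 part2 by blast
qed

lemma case2:
  assumes n: "n = 8 * k + 4" and k: "1 \<le> k"
  shows "(\<forall>r. even r \<and> 2 \<le> r \<and> r \<le> n - 2 \<longrightarrow> Ef n r \<le> Ef n 4)
    \<and> sorted_wrt (>) (map (\<lambda>r. Ef n r) (map (\<lambda>i. 4 * i) [1..<k + 1] @ map (\<lambda>i. 4 * k + 2 - 4 * i) [0..<k + 1]))"
proof -
  have n4: "n mod 4 = 0" proof - have "n = 4 * (2 * k + 1)" using n by simp then show ?thesis by simp qed
  define u1 where "u1 i = Ef n (4 * i)" for i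
  define u2 where "u2 i = Ef n (4 * k + 2 - 4 * i)" for i
  have st1: "u1 (Suc i) < u1 i" if "1 \<le> i" "Suc i < k + 1" for i
  proof -
    have "Ef n (4 * i + 4) < Ef n (4 * i)"
      by (rule S1) (use n4 that n in auto)
    moreover have "4 * Suc i = 4 * i + 4" by simp
    ultimately show ?thesis unfolding u1_def by (simp add: add.commute)
  qed
  have st2: "u2 (Suc i) < u2 i" if "0 \<le> i" "Suc i < k + 1" for i
  proof -
    from that(2) obtain j where "k = Suc (i + j)" using less_imp_Suc_add by force
    then have j: "k = i + 1 + j" by simp
    have "Ef n (4 * j + 2) < Ef n (4 * j + 2 + 4)"
      by (rule S2) (use n4 n j mod4_2 in auto)
    moreover have "4 * k + 2 - 4 * Suc i = 4 * j + 2" "4 * k + 2 - 4 * i = 4 * j + 2 + 4" using j by auto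
    ultimately show ?thesis unfolding u2_def by simp
  qed
  have junc: "u2 0 < u1 k" unfolding u1_def u2_def using S4[OF n k] by simp
  have le1: "u1 j \<le> u1 i" if "1 \<le> i" "i \<le> j" "j \<le> k" for i j
    using chain_le[of 1 "k+1" u1, OF st1] that by simp
  have le2: "u2 j \<le> u2 i" if "i \<le> j" "j < k + 1" for i j
    using chain_le[of 0 "k + 1" u2, OF st2] that by simp
  have part2: "sorted_wrt (>) (map (\<lambda>r. Ef n r) (map (\<lambda>i. 4 * i) [1..<k + 1] @ map (\<lambda>i. 4 * k + 2 - 4 * i) [0..<k + 1]))"
  proof -
    have eq: "map (\<lambda>r. Ef n r) (map (\<lambda>i. 4 * i) [1..<k + 1] @ map (\<lambda>i. 4 * k + 2 - 4 * i) [0..<k + 1])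
      = map u1 [1..<k + 1] @ map u2 [0..<k + 1]" by (simp add: u1_def u2_def)
    have s1: "sorted_wrt (>) (map u1 [1..<k + 1])" by (rule chain_sorted) (rule st1)
    have s2: "sorted_wrt (>) (map u2 [0..<k + 1])" by (rule chain_sorted) (rule st2)
    have cr: "\<forall>x\<in>set (map u1 [1..<k + 1]). \<forall>y\<in>set (map u2 [0..<k + 1]). x > y"
    proof (intro ballI)
      fix x y assume "x \<in> set (map u1 [1..<k + 1])" "y \<in> set (map u2 [0..<k + 1])"
      then obtain i j where ij: "x = u1 i" "1 \<le> i" "i \<le> k" "y = u2 j" "j < k + 1" by auto
      have "u1 k \<le> u1 i" using le1[of i k] ij by simp
      moreover have "u2 j \<le> u2 0" using le2[of 0 j] ij by simp
      ultimately show "x > y" using junc ij by simp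
    qed
    show ?thesis unfolding eq sorted_wrt_append using s1 s2 cr by blast
  qed
  have part1: "Ef n r \<le> Ef n 4" if r: "even r" "2 \<le> r" "r \<le> n - 2" for r
  proof -
    define s where "s = (if r \<le> 4 * k + 2 then r else n - r)"
    have rn: "r \<le> n" using r by simp
    have Es: "Ef n r = Ef n s" unfolding s_def using Ef_sym[OF rn] by simp
    have s: "even s" "2 \<le> s" "s \<le> 4 * k + 2" unfolding s_def using r n by auto
    have u14: "u1 1 = Ef n 4" unfolding u1_def by simp
    from even_mod4[OF s(1)] show ?thesis
    proof
      assume m: "s mod 4 = 0"
      define q where "q = s div 4"
      have sq: "s = 4 * q" unfolding q_def using m div_mult_mod_eq[of s 4] by simp
      have "1 \<le> q" "q \<le> k" using s sq by auto
      then have "u1 q \<le> u1 1" using le1[of 1 q] by simp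
      then show ?thesis using Es sq u14 unfolding u1_def by simp
    next
      assume m: "s mod 4 = 2"
      define q where "q = s div 4"
      have sq: "s = 4 * q + 2" unfolding q_def using m div_mult_mod_eq[of s 4] by simp
      have "q \<le> k" using s sq by auto
      then obtain j where j: "k = q + j" using le_Suc_ex by blast
      have "u2 j = Ef n s" unfolding u2_def using j sq by (simp add: algebra_simps)
      moreover have "u2 j \<le> u2 0" using le2[of 0 j] j by simp
      moreover have "u1 k \<le> u1 1" using le1[of 1 k] k by simp
      ultimately show ?thesis using Es junc u14 by simp
    qed
  qed
  show ?thesis using part1 part2 by blast
qed

theorem lemma3p7:
  fixes n :: nat
  assumes "n > 5" and "n mod 4 = 0"
  shows "(\<forall>r. even r \<and> 2 \<le> r \<and> r \<le> n - 2 \<longrightarrow>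
            energy_D_neg_neg n r (n - r) \<le> energy_D_neg_neg n 4 (n - 4))
    \<and> ((n div 2) mod 4 = 0 \<longrightarrow>
         sorted_wrt (>) (map (\<lambda>r. energy_D_neg_neg n r (n - r))
           (map (\<lambda>i. 4 * i) [1..<n div 8 + 1] @ map (\<lambda>i. n div 2 - 2 - 4 * i) [0..<n div 8])))
    \<and> ((n div 2) mod 4 = 2 \<longrightarrow>
         sorted_wrt (>) (map (\<lambda>r. energy_D_neg_neg n r (n - r))
           (map (\<lambda>i. 4 * i) [1..<n div 8 + 1] @ map (\<lambda>i. n div 2 - 4 * i) [0..<n div 8 + 1])))"
proof -
  define k where "k = n div 8"
  have nk: "n = 8 * k + n mod 8" unfolding k_def by simp
  have "(n mod 8) mod 4 = 0" using assms(2) by (simp add: mod_mod_cancel)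
  moreover have "n mod 8 < 8" by simp
  ultimately have "n mod 8 = 0 \<or> n mod 8 = 4"
    by (cases "n mod 8 = 0 \<or> n mod 8 = 1 \<or> n mod 8 = 2 \<or> n mod 8 = 3 \<or> n mod 8 = 4 \<or> n mod 8 = 5 \<or> n mod 8 = 6 \<or> n mod 8 = 7")
      (auto elim!: disjE)
  then show ?thesis
  proof
    assume m: "n mod 8 = 0"
    have n: "n = 8 * k" using nk m by simp
    have k: "1 \<le> k" using n assms(1) by (cases k) auto
    have d2: "n div 2 = 4 * k" using n by simp
    have "(n div 2) mod 4 = 0" using d2 by simp
    have kk: "n div 8 = k" unfolding k_def ..
    have "(\<lambda>i. n div 2 - 2 - 4 * i) = (\<lambda>i. 4 * k - 2 - 4 * i)" using d2 by simp
    then show ?thesis using case1[OF n k] \<open>(n div 2) mod 4 = 0\<close> unfolding kk by auto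
  next
    assume m: "n mod 8 = 4"
    have n: "n = 8 * k + 4" using nk m by simp
    have k: "1 \<le> k" using n assms(1) by (cases k) auto
    have d2: "n div 2 = 4 * k + 2" using n by simp
    have "(n div 2) mod 4 = 2" using d2 mod4_2 by simp
    have kk: "n div 8 = k" unfolding k_def ..
    have "(\<lambda>i. n div 2 - 4 * i) = (\<lambda>i. 4 * k + 2 - 4 * i)" using d2 by simp
    then show ?thesis using case2[OF n k] \<open>(n div 2) mod 4 = 2\<close> unfolding kk by auto
  qed
qed

end
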